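(* Let $\mathcal{A}$, $\mathbf{r}$, $V_d$ and $C_{2^m}$ be as below. For every $m\ge3$, $\pi^{-1}(V_{2^m})=V_{2^{m+1}}$, where $\pi:C_{2^{m+1}}\to C_{2^m}$ is reduction modulo $2^m$.
   Context: Let $\mathcal{P}$ be a primitive integral Apollonian 3-circle packing (start with three mutually tangent circles; in each curvilinear triangular gap bounded by three mutually tangent circles inscribe the unique three circles such that the six circles involved are each tangent to four others and disjoint from the remaining one; iterate ad infinitum; integral means all curvatures are integers, primitive means their gcd is 1). Fix mutually tangent circles $C_1,C_2,C_3$ of $\mathcal{P}$ with curvatures $\kappa_1,\kappa_2,\kappa_3$ and the three circles $C_{1'},C_{2'},C_{3'}$ inscribed in one of their gaps, labeled so that $C_{i'}$ is disjoint from $C_i$; then $\kappa_1+\kappa_{1'}=\kappa_2+\kappa_{2'}=\kappa_3+\kappa_{3'}=2w$, and set $\mathbf{r}=(\kappa_1,\kappa_2,\kappa_3,w)^T$. Let $Q(\kappa_1,\kappa_2,\kappa_3,w)=w^2-2w(\kappa_1+\kappa_2+\kappa_3)+\kappa_1^2+\kappa_2^2+\kappa_3^2$. Let $\tilde{\mathcal{A}}\subset GL(4,\mathbb{Z})$ be generated by the eight matrices (rows separated by semicolons) $S_{123}=(1,0,0,0;0,1,0,0;0,0,1,0;2,2,2,-1)$, $S_{1'23}=(-3,4,4,4;0,1,0,0;0,0,1,0;-2,2,2,3)$, $S_{12'3}=(1,0,0,0;4,-3,4,4;0,0,1,0;2,-2,2,3)$, $S_{123'}=(1,0,0,0;0,1,0,0;4,4,-3,4;2,2,-2,3)$,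 $S_{1'2'3}=(-3,-4,4,12;-4,-3,4,12;0,0,1,0;-2,-2,2,7)$, $S_{1'23'}=(-3,4,-4,12;0,1,0,0;-4,4,-3,12;-2,2,-2,7)$, $S_{12'3'}=(1,0,0,0;4,-3,-4,12;4,-4,-3,12;2,-2,-2,7)$, $S_{1'2'3'}=(-3,-4,-4,20;-4,-3,-4,20;-4,-4,-3,20;-2,-2,-2,11)$, and let $\mathcal{A}$ be its index-2 subgroup of products of an even number of these generators. Let $V=\mathcal{A}\cdot\mathbf{r}\subset\mathbb{Z}^4$ and $V_d$ its reduction modulo $d$. For $m\ge1$, $C_{2^m}$ is the set of $\mathbf{v}\in(\mathbb{Z}/2^m\mathbb{Z})^4$ such that some integer lift $\mathbf{w}$ of $\mathbf{v}$ satisfies $Q(\mathbf{w})\equiv0\pmod{2^{m+1}}$. *)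

theory Defs
  imports "HOL-Analysis.Analysis"
begin

text \<open>Vectors in Z^4 are int^4 (components $1,$2,$3,$4 = kappa1,kappa2,kappa3,w);
  4x4 integer matrices are int^4^4 (rows), acting by *v, multiplied by **.\<close>

definition mat4 :: "int list list \<Rightarrow> int^4^4" where
  "mat4 rs = (\<chi> i j. (rs ! (if i = 1 then 0 else if i = 2 then 1 else if i = 3 then 2 else 3))
                          ! (if j = 1 then 0 else if j = 2 then 1 else if j = 3 then 2 else 3))"

definition Qf :: "int^4 \<Rightarrow> int" where
  "Qf v = (v$4)^2 - 2 * (v$4) * (v$1 + v$2 + v$3) + (v$1)^2 + (v$2)^2 + (v$3)^2"

definition S_123 :: "int^4^4" where "S_123 = mat4 [[1,0,0,0],[0,1,0,0],[0,0,1,0],[2,2,2,-1]]"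
definition S_1'23 :: "int^4^4" where "S_1'23 = mat4 [[-3,4,4,4],[0,1,0,0],[0,0,1,0],[-2,2,2,3]]"
definition S_12'3 :: "int^4^4" where "S_12'3 = mat4 [[1,0,0,0],[4,-3,4,4],[0,0,1,0],[2,-2,2,3]]"
definition S_123' :: "int^4^4" where "S_123' = mat4 [[1,0,0,0],[0,1,0,0],[4,4,-3,4],[2,2,-2,3]]"
definition S_1'2'3 :: "int^4^4" where "S_1'2'3 = mat4 [[-3,-4,4,12],[-4,-3,4,12],[0,0,1,0],[-2,-2,2,7]]"
definition S_1'23' :: "int^4^4" where "S_1'23' = mat4 [[-3,4,-4,12],[0,1,0,0],[-4,4,-3,12],[-2,2,-2,7]]"
definition S_12'3' :: "int^4^4" where "S_12'3' = mat4 [[1,0,0,0],[4,-3,-4,12],[4,-4,-3,12],[2,-2,-2,7]]"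
definition S_1'2'3' :: "int^4^4" where "S_1'2'3' = mat4 [[-3,-4,-4,20],[-4,-3,-4,20],[-4,-4,-3,20],[-2,-2,-2,11]]"

definition gens :: "(int^4^4) set" where
  "gens = {S_123, S_1'23, S_12'3, S_123', S_1'2'3, S_1'23', S_12'3', S_1'2'3'}"

text \<open>The group generated by the generators. Each generator is an involution
  (S ** S = mat 1), so the generated group equals the set of finite products.\<close>
inductive_set Atilde :: "(int^4^4) set" where
  one: "mat 1 \<in> Atilde"
| step: "S \<in> gens \<Longrightarrow> M \<in> Atilde \<Longrightarrow> S ** M \<in> Atilde"

inductive_set Aeven :: "(int^4^4) set" where
  one: "mat 1 \<in> Aeven"
| step: "S \<in> gens \<Longrightarrow> T \<in> gens \<Longrightarrow> M \<in> Aeven \<Longrightarrow> S ** T ** M \<in> Aeven"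

text \<open>Curvatures of all circles of the packing generated from r: each configuration
  A r = (k1,k2,k3,w) contributes the six curvatures k_i and k_i' = 2w - k_i.\<close>
definition packing_curvatures :: "int^4 \<Rightarrow> int set" where
  "packing_curvatures r =
     {(M *v r) $ i | M i. M \<in> Atilde \<and> i \<in> {1,2,3}} \<union>
     {2 * (M *v r) $ 4 - (M *v r) $ i | M i. M \<in> Atilde \<and> i \<in> {1,2,3}}"

definition orbitV :: "int^4 \<Rightarrow> (int^4) set" where
  "orbitV r = (\<lambda>M. M *v r) ` Aeven"

text \<open>Reduction modulo d, with (Z/dZ)^4 represented by vectors with entries in [0,d).\<close>
definition red :: "int \<Rightarrow> int^4 \<Rightarrow> int^4" where
  "red d v = (\<chi> i. v $ i mod d)"

definition Vmod :: "int^4 \<Rightarrow> int \<Rightarrow> (int^4) set" where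
  "Vmod r d = red d ` orbitV r"

definition residues4 :: "int \<Rightarrow> (int^4) set" where
  "residues4 d = {v. \<forall>i. 0 \<le> v $ i \<and> v $ i < d}"

definition C2 :: "nat \<Rightarrow> (int^4) set" where
  "C2 m = {v \<in> residues4 (2^m). \<exists>w. red (2^m) w = v \<and> (2::int)^(m+1) dvd Qf w}"

end

theory Submission
  imports Defs
begin


lemma Aeven_mult: "A \<in> Aeven \<Longrightarrow> B \<in> Aeven \<Longrightarrow> A ** B \<in> Aeven"
proof (induction A rule: Aeven.induct)
  case one then show ?case by (simp add: matrix_mul_lid)
next
  case (step S T M)
  have "S ** T ** M ** B = S ** T ** (M ** B)" by (simp add: matrix_mul_assoc)
  then show ?case using step by (simp add: Aeven.step)
qed

lemma Atilde_mult: "A \<in> Atilde \<Longrightarrow> B \<in> Atilde \<Longrightarrow> A ** B \<in> Atilde"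
proof (induction A rule: Atilde.induct)
  case one then show ?case by (simp add: matrix_mul_lid)
next
  case (step S M)
  have "S ** M ** B = S ** (M ** B)" by (simp add: matrix_mul_assoc)
  then show ?case using step by (simp add: Atilde.step)
qed

lemmas mdefs = S_123_def S_1'23_def S_12'3_def S_123'_def S_1'2'3_def S_1'23'_def S_12'3'_def S_1'2'3'_def

lemma gens_inv: "S \<in> gens \<Longrightarrow> S ** S = mat 1"
  unfolding gens_def
  by (auto simp: mdefs mat4_def matrix_matrix_mult_def sum_4 vec_eq_iff forall_4 mat_def)

lemma gens_Q: "S \<in> gens \<Longrightarrow> Qf (S *v v) = Qf v"
  unfolding gens_def
  by (auto simp: mdefs mat4_def matrix_vector_mult_def sum_4 Qf_def algebra_simps power2_eq_square)

lemma Aeven_Q: "M \<in> Aeven \<Longrightarrow> Qf (M *v v) = Qf v"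
proof (induction M rule: Aeven.induct)
  case one then show ?case by simp
next
  case (step S T M)
  then show ?case by (simp add: matrix_vector_mul_assoc[symmetric] gens_Q)
qed

lemma Aeven_inv: "M \<in> Aeven \<Longrightarrow> \<exists>N\<in>Atilde. N ** M = mat 1"
proof (induction M rule: Aeven.induct)
  case one then show ?case by (auto intro: Atilde.one simp: matrix_mul_lid)
next
  case (step S T M)
  then obtain N where N: "N \<in> Atilde" "N ** M = mat 1" by blast
  have "T ** (S ** mat 1) \<in> Atilde" using step by (blast intro: Atilde.step Atilde.one)
  hence "N ** (T ** (S ** mat 1)) \<in> Atilde" using N by (simp add: Atilde_mult)
  moreover have "N ** (T ** (S ** mat 1)) ** (S ** T ** M) = mat 1"
  proof -
    have "N ** (T ** (S ** mat 1)) ** (S ** T ** M) = N ** (T ** ((S ** S) ** T) ** M)"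
      by (simp add: matrix_mul_assoc matrix_mul_rid)
    also have "\<dots> = mat 1" using step N by (simp add: gens_inv matrix_mul_lid)
    finally show ?thesis .
  qed
  ultimately show ?case by blast
qed



definition lvl :: "nat \<Rightarrow> int^4^4 \<Rightarrow> int^4^4" where
  "lvl k Y = (\<chi> i j. (if i = j then 1 else 0) + 2^k * Y$i$j)"

definition eqv2 :: "int^4^4 \<Rightarrow> int^4^4 \<Rightarrow> bool" where
  "eqv2 Y Z = (\<forall>i j. Y$i$j mod 2 = Z$i$j mod 2)"

definition PP :: "nat \<Rightarrow> int^4^4 \<Rightarrow> bool" where
  "PP k Y = (\<exists>Y'. lvl k Y' \<in> Aeven \<and> eqv2 Y' Y)"

definition smat :: "int \<Rightarrow> int^4^4 \<Rightarrow> int^4^4" where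
  "smat c Y = (\<chi> i j. c * Y$i$j)"

lemma lm: fixes A B :: "int^4^4"
  shows "((\<chi> i j. (if i = j then 1 else 0) + c * A$i$j) ** (\<chi> i j. (if i = j then 1 else 0) + c * B$i$j))
   = (\<chi> i j. (if i = j then 1 else 0) + c * (A$i$j + B$i$j + c * (A ** B)$i$j))"
proof -
  have "\<And>i j. (\<Sum>l\<in>UNIV. ((if i = l then 1 else 0) + c * A$i$l) * ((if l = j then 1 else 0) + c * B$l$j))
     = (if i = j then 1 else 0) + c * (A$i$j + B$i$j + c * (\<Sum>l\<in>UNIV. A$i$l * B$l$j))"
  proof -
    fix i j :: 4
    have e: "((if i = l then 1 else 0) + c * A$i$l) * ((if l = j then 1 else 0) + c * B$l$j)
       = (if i = l then (if l = j then 1 else 0) else 0) + (if i = l then c * B$l$j else 0)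
         + (if l = j then c * A$i$l else 0) + c * c * (A$i$l * B$l$j)" for l
      by (simp add: algebra_simps)
    show "?thesis i j"
      unfolding e by (simp add: sum.distrib sum_distrib_left algebra_simps)
  qed
  then show ?thesis by (simp add: matrix_matrix_mult_def vec_eq_iff)
qed

lemma lvl_mult: "lvl k A ** lvl k B = lvl k (\<chi> i j. A$i$j + B$i$j + 2^k * (A ** B)$i$j)"
  unfolding lvl_def lm by simp

lemma eqv2_trans: "eqv2 A B \<Longrightarrow> eqv2 B C \<Longrightarrow> eqv2 A C"
  unfolding eqv2_def by auto

lemma PP_eqv: "PP k A \<Longrightarrow> eqv2 A B \<Longrightarrow> PP k B"
  unfolding PP_def using eqv2_trans by blast

lemma PP_zero: "PP k 0"
proof -
  have "lvl k 0 = mat 1" by (simp add: lvl_def mat_def vec_eq_iff)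
  then show ?thesis unfolding PP_def eqv2_def using Aeven.one by (metis)
qed

lemma mod2_shift: "((u::int) + 2 * z) mod 2 = u mod 2"
  by simp

lemma PP_add: assumes "k \<ge> 1" "PP k A" "PP k B" shows "PP k (A + B)"
proof -
  obtain A' B' where A': "lvl k A' \<in> Aeven" "eqv2 A' A" and B': "lvl k B' \<in> Aeven" "eqv2 B' B"
    using assms unfolding PP_def by blast
  define C where "C = (\<chi> i j. A'$i$j + B'$i$j + 2^k * (A' ** B')$i$j)"
  have "lvl k C \<in> Aeven"
    using Aeven_mult[OF A'(1) B'(1)] unfolding C_def lvl_mult .
  moreover have "eqv2 C (A + B)"
    unfolding eqv2_def
  proof (intro allI)
    fix i j
    obtain k' where k': "k = Suc k'" using assms(1) by (cases k) auto
    have "C$i$j = (A'$i$j + B'$i$j) + 2 * (2^k' * (A' ** B')$i$j)"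
      unfolding C_def k' by simp
    then have "C$i$j mod 2 = (A'$i$j + B'$i$j) mod 2" using mod2_shift by metis
    also have "\<dots> = (A$i$j + B$i$j) mod 2"
      using A'(2) B'(2) unfolding eqv2_def by (intro mod_add_cong) auto
    finally show "C$i$j mod 2 = (A + B)$i$j mod 2" by simp
  qed
  ultimately show ?thesis unfolding PP_def by blast
qed

lemma PP_smat: assumes "PP k A" shows "PP k (smat c A)"
proof (cases "even c")
  case True
  then have "eqv2 0 (smat c A)" unfolding eqv2_def smat_def by auto
  then show ?thesis using PP_zero PP_eqv by blast
next
  case False
  then have c1: "c mod 2 = 1" by presburger
  have "eqv2 A (smat c A)" unfolding eqv2_def smat_def
  proof (intro allI)
    fix i j
    have "(c * A$i$j) mod 2 = ((c mod 2) * (A$i$j mod 2)) mod 2" by (simp add: mod_mult_eq)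
    then show "A$i$j mod 2 = (\<chi> i j. c * A$i$j)$i$j mod 2" using c1 by simp
  qed
  then show ?thesis using assms PP_eqv by blast
qed

lemma PP_lift: assumes "k \<ge> 2" "PP k A" shows "PP (Suc k) A"
proof -
  obtain A' where A': "lvl k A' \<in> Aeven" "eqv2 A' A"
    using assms unfolding PP_def by blast
  obtain k' where k': "k = Suc (Suc k')" using assms(1) by (metis add_2_eq_Suc le_Suc_ex)
  define A2 where "A2 = (\<chi> i j. A'$i$j + 2 * (2^k' * (A' ** A')$i$j))"
  have eq: "(2::int)^k * (A'$i$j + A'$i$j + 2^k * (A' ** A')$i$j) = 2^Suc k * A2$i$j" for i j
    unfolding A2_def k' by (simp add: algebra_simps)
  have "lvl k A' ** lvl k A' = lvl k (\<chi> i j. A'$i$j + A'$i$j + 2^k * (A' ** A')$i$j)"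
    by (rule lvl_mult)
  also have "\<dots> = lvl (Suc k) A2"
    unfolding lvl_def by (simp only: vec_lambda_beta eq)
  finally have "lvl k A' ** lvl k A' = lvl (Suc k) A2" .
  moreover have "eqv2 A2 A" using A'(2) unfolding eqv2_def A2_def by simp
  ultimately show ?thesis unfolding PP_def using Aeven_mult[OF A'(1) A'(1)] by metis
qed

lemma PP_up: assumes "PP 3 A" "m \<ge> 3" shows "PP m A"
  using assms(2)
proof (induction m rule: dec_induct)
  case base then show ?case using assms(1) .
next
  case (step n) then show ?case using PP_lift by simp
qed



definition Y1 :: "int^4^4" where "Y1 = mat4 [[4,-7,8,11],[1,-2,2,3],[0,0,0,0],[8,-14,16,22]]"

lemma W1_in: "S_123 ** S_1'23 ** (S_1'2'3 ** S_12'3 ** mat 1) \<in> Aeven"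
  by (intro Aeven.step Aeven.one) (simp_all add: gens_def)

lemma W1_eq: "S_123 ** S_1'23 ** (S_1'2'3 ** S_12'3 ** mat 1) = lvl 3 Y1"
  by (simp add: Y1_def lvl_def mdefs mat4_def matrix_matrix_mult_def sum_4 vec_eq_iff forall_4 mat_def)

lemma PP_Y1: "PP 3 Y1"
  unfolding PP_def eqv2_def using W1_in W1_eq by metis

definition Y2 :: "int^4^4" where "Y2 = mat4 [[4,8,-7,11],[0,0,0,0],[1,2,-2,3],[8,16,-14,22]]"

lemma W2_in: "S_123 ** S_1'23 ** (S_1'23' ** S_123' ** mat 1) \<in> Aeven"
  by (intro Aeven.step Aeven.one) (simp_all add: gens_def)

lemma W2_eq: "S_123 ** S_1'23 ** (S_1'23' ** S_123' ** mat 1) = lvl 3 Y2"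
  by (simp add: Y2_def lvl_def mdefs mat4_def matrix_matrix_mult_def sum_4 vec_eq_iff forall_4 mat_def)

lemma PP_Y2: "PP 3 Y2"
  unfolding PP_def eqv2_def using W2_in W2_eq by metis

definition Y3 :: "int^4^4" where "Y3 = mat4 [[-1,3,3,1],[0,0,0,0],[0,0,0,0],[-1,4,4,1]]"

lemma W3_in: "S_123 ** S_1'23 ** (S_123 ** S_1'23 ** mat 1) \<in> Aeven"
  by (intro Aeven.step Aeven.one) (simp_all add: gens_def)

lemma W3_eq: "S_123 ** S_1'23 ** (S_123 ** S_1'23 ** mat 1) = lvl 3 Y3"
  by (simp add: Y3_def lvl_def mdefs mat4_def matrix_matrix_mult_def sum_4 vec_eq_iff forall_4 mat_def)

lemma PP_Y3: "PP 3 Y3"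
  unfolding PP_def eqv2_def using W3_in W3_eq by metis

definition Y4 :: "int^4^4" where "Y4 = mat4 [[-5,-10,11,26],[-1,-2,2,5],[0,0,0,0],[-9,-18,20,47]]"

lemma W4_in: "S_123 ** S_1'23 ** (S_12'3 ** S_1'2'3 ** mat 1) \<in> Aeven"
  by (intro Aeven.step Aeven.one) (simp_all add: gens_def)

lemma W4_eq: "S_123 ** S_1'23 ** (S_12'3 ** S_1'2'3 ** mat 1) = lvl 3 Y4"
  by (simp add: Y4_def lvl_def mdefs mat4_def matrix_matrix_mult_def sum_4 vec_eq_iff forall_4 mat_def)

lemma PP_Y4: "PP 3 Y4"
  unfolding PP_def eqv2_def using W4_in W4_eq by metis

definition Y5 :: "int^4^4" where "Y5 = mat4 [[0,0,0,0],[8,4,-7,11],[2,1,-2,3],[16,8,-14,22]]"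

lemma W5_in: "S_123 ** S_12'3 ** (S_12'3' ** S_123' ** mat 1) \<in> Aeven"
  by (intro Aeven.step Aeven.one) (simp_all add: gens_def)

lemma W5_eq: "S_123 ** S_12'3 ** (S_12'3' ** S_123' ** mat 1) = lvl 3 Y5"
  by (simp add: Y5_def lvl_def mdefs mat4_def matrix_matrix_mult_def sum_4 vec_eq_iff forall_4 mat_def)

lemma PP_Y5: "PP 3 Y5"
  unfolding PP_def eqv2_def using W5_in W5_eq by metis

definition Y6 :: "int^4^4" where "Y6 = mat4 [[0,0,0,0],[3,-1,3,1],[0,0,0,0],[4,-1,4,1]]"

lemma W6_in: "S_123 ** S_12'3 ** (S_123 ** S_12'3 ** mat 1) \<in> Aeven"
  by (intro Aeven.step Aeven.one) (simp_all add: gens_def)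

lemma W6_eq: "S_123 ** S_12'3 ** (S_123 ** S_12'3 ** mat 1) = lvl 3 Y6"
  by (simp add: Y6_def lvl_def mdefs mat4_def matrix_matrix_mult_def sum_4 vec_eq_iff forall_4 mat_def)

lemma PP_Y6: "PP 3 Y6"
  unfolding PP_def eqv2_def using W6_in W6_eq by metis



definition bf :: "int^4 \<Rightarrow> int^4 \<Rightarrow> int" where
  "bf x t = x$4*t$4 - x$4*(t$1+t$2+t$3) - t$4*(x$1+x$2+x$3) + x$1*t$1 + x$2*t$2 + x$3*t$3"

lemma Q_shift: assumes "\<forall>i. w$i = x$i + c * t$i"
  shows "Qf w = Qf x + 2*c*bf x t + c^2 * Qf t"
  using assms unfolding Qf_def bf_def by (simp add: power2_eq_square algebra_simps)

lemma bf_split: assumes "\<forall>i. x$i = a$i + 2 * p$i"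
  shows "bf x t = bf a t + 2 * bf p t"
  using assms unfolding bf_def by (simp add: algebra_simps)

lemma lvl_mv: "(lvl k Y *v x)$i = x$i + 2^k * (Y *v x)$i"
proof -
  have e: "((if i = j then 1 else 0) + 2^k * Y$i$j) * x$j = (if i = j then x$j else 0) + 2^k * (Y$i$j * x$j)" for j
    by (simp add: algebra_simps)
  show ?thesis unfolding lvl_def matrix_vector_mult_def
    by (simp add: e sum.distrib sum_distrib_left)
qed

lemma mv_cong2: assumes "eqv2 Y' Y" "\<forall>j. x$j mod 2 = a$j mod 2"
  shows "(Y' *v x)$i mod 2 = (Y *v a)$i mod 2"
proof -
  have h: "Y'$i$j mod 2 = Y$i$j mod 2" for j using assms(1) unfolding eqv2_def by blast
  have hx: "x$j mod 2 = a$j mod 2" for j using assms(2) by blast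
  show ?thesis unfolding matrix_vector_mult_def vec_lambda_beta sum_4
    by (intro mod_add_cong mod_mult_cong h hx)
qed

lemma shift_mod: assumes "(a::int) mod 2 = b mod 2"
  shows "(x + 2^m * a) mod 2^(m+1) = (x + 2^m * b) mod 2^(m+1)"
proof -
  have "2 dvd a - b" using assms by (simp add: mod_eq_dvd_iff)
  then obtain k where "a - b = 2 * k" by (auto simp: dvd_def)
  then have k: "a = b + 2 * k" by simp
  have "x + 2^m * a = (x + 2^m * b) + k * 2^(m+1)" unfolding k by (simp add: algebra_simps)
  then show ?thesis by (simp only: mod_mult_self1)
qed

lemma even_mv: assumes "\<forall>j. even (y$j)" shows "even ((N *v y)$i)"
  unfolding matrix_vector_mult_def using assms by (simp add: dvd_sum)

lemma prim_nonzero: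
  assumes prim: "Gcd (packing_curvatures r) = 1" and M: "M \<in> Aeven"
    and ev: "\<forall>i. even ((M *v r)$i)"
  shows False
proof -
  obtain N where N: "N \<in> Atilde" "N ** M = mat 1" using Aeven_inv[OF M] by blast
  have "r = N *v (M *v r)" using N(2) by (simp add: matrix_vector_mul_assoc)
  then have er: "\<forall>j. even (r$j)" using even_mv[OF ev] by metis
  have "\<forall>c\<in>packing_curvatures r. 2 dvd c"
    unfolding packing_curvatures_def using even_mv[OF er] by auto
  then have "2 dvd Gcd (packing_curvatures r)" by (simp add: Gcd_greatest)
  then show False using prim by simp
qed

lemma caseA:
  assumes "m \<ge> 3" "a$1 = 1" "a$2 = 0" "a$3 = 0" "a$4 = 1" "even (bf a t)"
  shows "\<exists>Y. PP m Y \<and> (\<forall>i. (Y *v a)$i mod 2 = t$i mod 2)"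
proof -
  have "PP m (smat (t$ 1) Y4 + smat (t$ 2) Y5 + smat (t$ 4) Y6)"
    using PP_add[OF _ PP_add[OF _ PP_smat[OF PP_up[OF PP_Y4 assms(1)]] PP_smat[OF PP_up[OF PP_Y5 assms(1)]]] PP_smat[OF PP_up[OF PP_Y6 assms(1)]]] assms(1) by simp
  moreover have "\<forall>i. ((smat (t$ 1) Y4 + smat (t$ 2) Y5 + smat (t$ 4) Y6) *v a)$i mod 2 = t$i mod 2"
    using assms(2-) unfolding forall_4 bf_def
    apply (simp add: matrix_vector_mult_def sum_4 smat_def Y4_def Y5_def Y6_def mat4_def)
    by (intro conjI; presburger)
  ultimately show ?thesis by blast
qed

lemma caseB:
  assumes "m \<ge> 3" "a$1 = 0" "a$2 = 1" "a$3 = 0" "a$4 = 1" "even (bf a t)"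
  shows "\<exists>Y. PP m Y \<and> (\<forall>i. (Y *v a)$i mod 2 = t$i mod 2)"
proof -
  have "PP m (smat (t$ 1) Y2 + smat (t$ 2) Y1 + smat (t$ 4) Y3)"
    using PP_add[OF _ PP_add[OF _ PP_smat[OF PP_up[OF PP_Y2 assms(1)]] PP_smat[OF PP_up[OF PP_Y1 assms(1)]]] PP_smat[OF PP_up[OF PP_Y3 assms(1)]]] assms(1) by simp
  moreover have "\<forall>i. ((smat (t$ 1) Y2 + smat (t$ 2) Y1 + smat (t$ 4) Y3) *v a)$i mod 2 = t$i mod 2"
    using assms(2-) unfolding forall_4 bf_def
    apply (simp add: matrix_vector_mult_def sum_4 smat_def Y2_def Y1_def Y3_def mat4_def)
    by (intro conjI; presburger)
  ultimately show ?thesis by blast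
qed

lemma caseC:
  assumes "m \<ge> 3" "a$1 = 0" "a$2 = 0" "a$3 = 1" "a$4 = 1" "even (bf a t)"
  shows "\<exists>Y. PP m Y \<and> (\<forall>i. (Y *v a)$i mod 2 = t$i mod 2)"
proof -
  have "PP m (smat (t$ 1) Y1 + smat (t$ 3) Y2 + smat (t$ 4) Y3)"
    using PP_add[OF _ PP_add[OF _ PP_smat[OF PP_up[OF PP_Y1 assms(1)]] PP_smat[OF PP_up[OF PP_Y2 assms(1)]]] PP_smat[OF PP_up[OF PP_Y3 assms(1)]]] assms(1) by simp
  moreover have "\<forall>i. ((smat (t$ 1) Y1 + smat (t$ 3) Y2 + smat (t$ 4) Y3) *v a)$i mod 2 = t$i mod 2"
    using assms(2-) unfolding forall_4 bf_def
    apply (simp add: matrix_vector_mult_def sum_4 smat_def Y1_def Y2_def Y3_def mat4_def)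
    by (intro conjI; presburger)
  ultimately show ?thesis by blast
qed

lemma a_cases:
  fixes a :: "int^4"
  assumes "\<forall>i. a$i = 0 \<or> a$i = 1" "4 dvd Qf a" "\<not>(\<forall>i. a$i = 0)"
  shows "(a$1=1 \<and> a$2=0 \<and> a$3=0 \<and> a$4=1) \<or> (a$1=0 \<and> a$2=1 \<and> a$3=0 \<and> a$4=1)
     \<or> (a$1=0 \<and> a$2=0 \<and> a$3=1 \<and> a$4=1)"
proof -
  have "a$1 = 0 \<or> a$1 = 1" "a$2 = 0 \<or> a$2 = 1" "a$3 = 0 \<or> a$3 = 1" "a$4 = 0 \<or> a$4 = 1"
    using assms(1) by auto
  moreover have "\<not>(a$1 = 0 \<and> a$2 = 0 \<and> a$3 = 0 \<and> a$4 = 0)" using assms(3) unfolding forall_4 .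
  ultimately show ?thesis using assms(2) unfolding Qf_def by auto
qed

lemma finish:
  assumes PY: "PP m Y" and M: "M \<in> Aeven"
    and par: "\<forall>j. (M *v r)$j mod 2 = a$j mod 2"
    and Ya: "\<forall>i. (Y *v a)$i mod 2 = t$i mod 2"
    and wt: "\<forall>i. w$i = (M *v r)$i + 2^m * t$i"
  shows "red (2^(m+1)) w \<in> Vmod r (2^(m+1))"
proof -
  obtain Y' where Y': "lvl m Y' \<in> Aeven" "eqv2 Y' Y" using PY unfolding PP_def by blast
  define K where "K = lvl m Y' ** M"
  have K: "K \<in> Aeven" unfolding K_def using Aeven_mult[OF Y'(1) M] .
  have "w$i mod 2^(m+1) = (K *v r)$i mod 2^(m+1)" for i
  proof -
    have e: "(K *v r)$i = (M *v r)$i + 2^m * (Y' *v (M *v r))$i"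
      unfolding K_def by (simp add: matrix_vector_mul_assoc[symmetric] lvl_mv)
    have "(Y' *v (M *v r))$i mod 2 = t$i mod 2"
      using mv_cong2[OF Y'(2) par] Ya by simp
    then have "((M *v r)$i + 2^m * (Y' *v (M *v r))$i) mod 2^(m+1) = ((M *v r)$i + 2^m * t$i) mod 2^(m+1)"
      by (rule shift_mod)
    then show ?thesis using e wt by simp
  qed
  then have "red (2^(m+1)) w = red (2^(m+1)) (K *v r)" unfolding red_def by (simp add: vec_eq_iff)
  then show ?thesis unfolding Vmod_def orbitV_def using K by blast
qed

theorem lemma2p9:
  fixes r :: "int^4" and m :: nat
  assumes descartes: "Qf r = 0"
    and primitive: "Gcd (packing_curvatures r) = 1"
    and m3: "m \<ge> 3"
  shows "{v \<in> C2 (m+1). red (2^m) v \<in> Vmod r (2^m)} = Vmod r (2^(m+1))"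
proof
  have modmod: "(y mod 2^(m+1)) mod 2^m = y mod (2^m::int)" for y
    by (simp add: mod_mod_cancel le_imp_power_dvd)
  show "{v \<in> C2 (m+1). red (2^m) v \<in> Vmod r (2^m)} \<subseteq> Vmod r (2^(m+1))"
  proof
    fix v assume "v \<in> {v \<in> C2 (m+1). red (2^m) v \<in> Vmod r (2^m)}"
    then have vC: "v \<in> C2 (m+1)" and vV: "red (2^m) v \<in> Vmod r (2^m)" by auto
    from vC obtain w where wv: "red (2^(m+1)) w = v" and wQ: "(2::int)^(m+1+1) dvd Qf w"
      unfolding C2_def by auto
    from vV obtain M where M: "M \<in> Aeven" and vM: "red (2^m) v = red (2^m) (M *v r)"
      unfolding Vmod_def orbitV_def by auto
    define x where "x = M *v r"
    have Qx: "Qf x = 0" unfolding x_def using Aeven_Q[OF M] descartes by simp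
    have wx: "w$i mod 2^m = x$i mod 2^m" for i
    proof -
      have "v$i mod 2^m = x$i mod 2^m" using vM unfolding x_def red_def by (simp add: vec_eq_iff)
      moreover have "v$i = w$i mod 2^(m+1)" using wv unfolding red_def by auto
      ultimately show ?thesis using modmod by simp
    qed
    define t where "t = (\<chi> i. (w$i - x$i) div 2^m)"
    have wt: "\<forall>i. w$i = x$i + 2^m * t$i"
    proof
      fix i
      have "(2::int)^m dvd w$i - x$i" using wx[of i] by (simp add: mod_eq_dvd_iff)
      then show "w$i = x$i + 2^m * t$i" unfolding t_def by simp
    qed
    have QW: "Qf w = 2 * 2^m * bf x t + (2^m)^2 * Qf t" using Q_shift[OF wt] Qx by simp
    have beven: "even (bf x t)"
    proof -
      have "(2::int)^(m+2) dvd (2^m)^2"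
      proof -
        have "(2::int)^(m+2) dvd 2^(m*2)" using m3 by (intro le_imp_power_dvd) simp
        then show ?thesis by (simp add: power_mult)
      qed
      then have d1: "(2::int)^(m+2) dvd (2^m)^2 * Qf t" by (rule dvd_mult2)
      have "(2::int)^(m+2) dvd Qf w" using wQ by (simp add: add.assoc)
      then have "(2::int)^(m+2) dvd 2 * 2^m * bf x t" using d1 QW by (simp add: dvd_add_left_iff)
      then have "(2::int)^(m+1) * 2 dvd 2^(m+1) * bf x t" by (simp add: algebra_simps)
      then show ?thesis by (subst (asm) dvd_mult_cancel_left) simp
    qed
    define a where "a = (\<chi> i. x$i mod 2)"
    define p where "p = (\<chi> i. x$i div 2)"
    have xap: "\<forall>i. x$i = a$i + 2 * p$i" unfolding a_def p_def by simp
    have "Qf x = Qf a + 2 * 2 * bf a p + 2^2 * Qf p" using Q_shift[OF xap] .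
    then have "Qf a = 4 * (- bf a p - Qf p)" using Qx by (simp add: algebra_simps)
    then have Qa: "4 dvd Qf a" by (metis dvd_triv_left)
    have a01: "\<forall>i. a$i = 0 \<or> a$i = 1" unfolding a_def by auto
    have anz: "\<not>(\<forall>i. a$i = 0)"
    proof
      assume "\<forall>i. a$i = 0"
      then have "\<forall>i. even ((M *v r)$i)" unfolding a_def x_def by (simp add: even_iff_mod_2_eq_zero)
      then show False using prim_nonzero[OF primitive M] by blast
    qed
    have beven_a: "even (bf a t)" using bf_split[OF xap, of t] beven by simp
    obtain Y where Y: "PP m Y" "\<forall>i. (Y *v a)$i mod 2 = t$i mod 2"
      using a_cases[OF a01 Qa anz] caseA[OF m3 _ _ _ _ beven_a] caseB[OF m3 _ _ _ _ beven_a]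
        caseC[OF m3 _ _ _ _ beven_a] by blast
    have par: "\<forall>j. (M *v r)$j mod 2 = a$j mod 2" unfolding a_def x_def by simp
    have "red (2^(m+1)) w \<in> Vmod r (2^(m+1))"
      using finish[OF Y(1) M par Y(2)] wt unfolding x_def by blast
    then show "v \<in> Vmod r (2^(m+1))" using wv by simp
  qed
  show "Vmod r (2^(m+1)) \<subseteq> {v \<in> C2 (m+1). red (2^m) v \<in> Vmod r (2^m)}"
  proof
    fix v assume "v \<in> Vmod r (2^(m+1))"
    then obtain M where M: "M \<in> Aeven" and v: "v = red (2^(m+1)) (M *v r)"
      unfolding Vmod_def orbitV_def by auto
    have Q0: "Qf (M *v r) = 0" using Aeven_Q[OF M] descartes by simp
    have "v \<in> residues4 (2^(m+1))" unfolding v residues4_def red_def by simp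
    then have "v \<in> C2 (m+1)" unfolding C2_def using v Q0 by auto
    moreover have "red (2^m) v = red (2^m) (M *v r)"
      unfolding v red_def using modmod by (simp add: vec_eq_iff)
    then have "red (2^m) v \<in> Vmod r (2^m)" unfolding Vmod_def orbitV_def using M by blast
    ultimately show "v \<in> {v \<in> C2 (m+1). red (2^m) v \<in> Vmod r (2^m)}" by blast
  qed
qed


end
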